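(* Let $\gamma>0$ and let $\mathcal{W}_\gamma\subseteq(\mathbb{C}^M)^G$ be either the sum-power set $\{\mathbf{w}:\sum_{g\in\mathcal{G}}\|\mathbf{w}_g\|_2^2\le\gamma\}$ or the per-antenna-power set $\{\mathbf{w}:\sum_{g\in\mathcal{G}}|[\mathbf{w}_g]_m|^2\le\gamma,\ m=1,\dots,M\}$, where $[\mathbf{w}_g]_m$ is the $m$-th entry of $\mathbf{w}_g$. Consider $$V_{\mathrm{MMF}}=\sup_{\mathbf{w}\in\mathcal{W}_\gamma}\ \min_{g\in\mathcal{G},\,i\in\mathcal{N}_g}\ \inf_{\mathbf{e}_{ig}\in\mathcal{S}_{ig}}\mathrm{SINR}_{ig}(\mathbf{w},\mathbf{e}_{ig}),$$ $$V_{\mathrm{App}}=\sup\big\{t\ge 0:\ \exists\,\mathbf{w}\in\mathcal{W}_\gamma \text{ with } \zeta_{ig}(\mathbf{w},t)-|\mathbf{w}_g^H\hat{\mathbf{h}}_{ig}|\le 0\ \ \forall i\in\mathcal{N}_g,g\in\mathcal{G}\big\}.$$ Then: (a) if $t\ge0$ and $\mathbf{w}\in\mathcal{W}_\gamma$ satisfy $\zeta_{ig}(\mathbf{w},t)-|\mathbf{w}_g^H\hat{\mathbf{h}}_{ig}|\le 0$ for all $i\in\mathcal{N}_g,g\in\mathcal{G}$, then $\mathrm{SINR}_{ig}(\mathbf{w},\mathbf{e}_{ig})\ge t$ for all $i\in\mathcal{N}_g$, $g\in\mathcal{G}$, $\mathbf{e}_{ig}\in\mathcal{S}_{ig}$;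 (b) $V_{\mathrm{App}}\le V_{\mathrm{MMF}}$; (c) if $G=1$ and $\mathbf{C}_{i1}=\mu^{-2}\mathbf{I}_M$ for all $i\in\mathcal{N}_1$ with a constant $\mu>0$, then $V_{\mathrm{App}}=V_{\mathrm{MMF}}$.
   Context: Setting: $M\ge1$, $G\ge 1$, $\mathcal{G}=\{1,\dots,G\}$, finite nonempty index sets $\mathcal{N}_g$; for $i\in\mathcal{N}_g$, $g\in\mathcal{G}$: $\hat{\mathbf{h}}_{ig}\in\mathbb{C}^M$, $\sigma_{ig}>0$, $\mathbf{C}_{ig}$ Hermitian positive definite, $\varepsilon_{ig}=1/\sqrt{\lambda_{\min}(\mathbf{C}_{ig})}$, $\mathcal{S}_{ig}=\{\mathbf{e}\in\mathbb{C}^M:\mathbf{e}^H\mathbf{C}_{ig}\mathbf{e}\le 1\}$. For $\mathbf{w}=(\mathbf{w}_l)_{l\in\mathcal{G}}$, $\mathbf{w}_l\in\mathbb{C}^M$: $$\mathrm{SINR}_{ig}(\mathbf{w},\mathbf{e}_{ig})=\frac{|\mathbf{w}_g^H(\hat{\mathbf{h}}_{ig}+\mathbf{e}_{ig})|^2}{\sum_{l\in\mathcal{G},l\ne g}|\mathbf{w}_l^H(\hat{\mathbf{h}}_{ig}+\mathbf{e}_{ig})|^2+\sigma_{ig}^2},$$ and for $\tau\ge0$, $$\zeta_{ig}(\mathbf{w},\tau)=\varepsilon_{ig}\|\mathbf{w}_g\|_2+\sqrt{\tau}\,\sqrt{\sum_{l\in\mathcal{G},l\ne g}\big(|\mathbf{w}_l^H\hat{\mathbf{h}}_{ig}|+\varepsilon_{ig}\|\mathbf{w}_l\|_2\big)^2+\sigma_{ig}^2}.$$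 *)

theory Defs
  imports "HOL-Analysis.Analysis"
begin

text \<open>Vectors in C^M are modelled as complex ^ 'm (M = CARD('m) \<ge> 1),
 M x M matrices as complex ^ 'm ^ 'm. Groups are 1..G, beamformers
 w :: nat \<Rightarrow> complex ^ 'm (only w 1, ..., w G matter). Users of group g are
 the elements of N g :: 'u set; per-user data are indexed by (i, g).\<close>

definition hip :: "complex ^ 'm \<Rightarrow> complex ^ 'm \<Rightarrow> complex" where
  "hip x y = (\<Sum>j\<in>UNIV. cnj (x $ j) * y $ j)"

definition hermitian :: "complex ^ 'm ^ 'm \<Rightarrow> bool" where
  "hermitian A \<longleftrightarrow> (\<forall>i j. A $ i $ j = cnj (A $ j $ i))"

definition pos_def_herm :: "complex ^ 'm ^ 'm \<Rightarrow> bool" where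
  "pos_def_herm A \<longleftrightarrow> hermitian A \<and> (\<forall>x. x \<noteq> 0 \<longrightarrow> Re (hip x (A *v x)) > 0)"

text \<open>Smallest eigenvalue (eigenvalues of a Hermitian matrix are real).\<close>
definition lambda_min :: "complex ^ 'm ^ 'm \<Rightarrow> real" where
  "lambda_min A = Min {r::real. \<exists>x. x \<noteq> 0 \<and> A *v x = complex_of_real r *s x}"

definition eps :: "complex ^ 'm ^ 'm \<Rightarrow> real" where
  "eps A = 1 / sqrt (lambda_min A)"

definition ellipsoid :: "complex ^ 'm ^ 'm \<Rightarrow> (complex ^ 'm) set" where
  "ellipsoid A = {e. Re (hip e (A *v e)) \<le> 1}"

definition sinr :: "nat \<Rightarrow> (nat \<Rightarrow> complex ^ 'm) \<Rightarrow> complex ^ 'm \<Rightarrow> real \<Rightarrow> nat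
    \<Rightarrow> complex ^ 'm \<Rightarrow> real" where
  "sinr G w h \<sigma> g e =
     (cmod (hip (w g) (h + e)))\<^sup>2 /
     ((\<Sum>l\<in>{1..G} - {g}. (cmod (hip (w l) (h + e)))\<^sup>2) + \<sigma>\<^sup>2)"

definition zeta :: "nat \<Rightarrow> (nat \<Rightarrow> complex ^ 'm) \<Rightarrow> complex ^ 'm \<Rightarrow> real \<Rightarrow> real \<Rightarrow> nat
    \<Rightarrow> real \<Rightarrow> real" where
  "zeta G w h \<sigma> \<epsilon> g t =
     \<epsilon> * norm (w g) +
     sqrt t * sqrt ((\<Sum>l\<in>{1..G} - {g}. (cmod (hip (w l) h) + \<epsilon> * norm (w l))\<^sup>2) + \<sigma>\<^sup>2)"

datatype power_constraint = SumPower | PerAntenna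

definition Wset :: "power_constraint \<Rightarrow> real \<Rightarrow> nat \<Rightarrow> (nat \<Rightarrow> complex ^ 'm) set" where
  "Wset pc \<gamma> G = (case pc of
      SumPower \<Rightarrow> {w. (\<Sum>g\<in>{1..G}. (norm (w g))\<^sup>2) \<le> \<gamma>}
    | PerAntenna \<Rightarrow> {w. \<forall>m. (\<Sum>g\<in>{1..G}. (cmod (w g $ m))\<^sup>2) \<le> \<gamma>})"

definition V_MMF :: "power_constraint \<Rightarrow> real \<Rightarrow> nat \<Rightarrow> (nat \<Rightarrow> 'u set)
    \<Rightarrow> ('u \<Rightarrow> nat \<Rightarrow> complex ^ 'm) \<Rightarrow> ('u \<Rightarrow> nat \<Rightarrow> real)
    \<Rightarrow> ('u \<Rightarrow> nat \<Rightarrow> complex ^ 'm ^ 'm) \<Rightarrow> real" where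
  "V_MMF pc \<gamma> G N h \<sigma> C =
     (SUP w\<in>Wset pc \<gamma> G.
        Min ((\<lambda>(i, g). INF e\<in>ellipsoid (C i g). sinr G w (h i g) (\<sigma> i g) g e)
             ` {(i, g). g \<in> {1..G} \<and> i \<in> N g}))"

definition V_App :: "power_constraint \<Rightarrow> real \<Rightarrow> nat \<Rightarrow> (nat \<Rightarrow> 'u set)
    \<Rightarrow> ('u \<Rightarrow> nat \<Rightarrow> complex ^ 'm) \<Rightarrow> ('u \<Rightarrow> nat \<Rightarrow> real)
    \<Rightarrow> ('u \<Rightarrow> nat \<Rightarrow> complex ^ 'm ^ 'm) \<Rightarrow> real" where
  "V_App pc \<gamma> G N h \<sigma> C =
     Sup {t. t \<ge> 0 \<and> (\<exists>w\<in>Wset pc \<gamma> G. \<forall>g\<in>{1..G}. \<forall>i\<in>N g.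
              zeta G w (h i g) (\<sigma> i g) (eps (C i g)) g t - cmod (hip (w g) (h i g)) \<le> 0)}"

end

theory Submission
  imports Defs
begin

lemma hip_add_right: "hip x (y + z) = hip x y + hip x z"
  unfolding hip_def by (simp add: sum.distrib distrib_left)
lemma hip_add_left: "hip (x + y) z = hip x z + hip y z"
  unfolding hip_def by (simp add: sum.distrib distrib_right)
lemma hip_diff_right: "hip x (y - z) = hip x y - hip x z"
  unfolding hip_def by (simp add: sum_subtractf right_diff_distrib)
lemma hip_diff_left: "hip (x - y) z = hip x z - hip y z"
  unfolding hip_def by (simp add: sum_subtractf left_diff_distrib)
lemma hip_scale_right: "hip x (c *s y) = c * hip x y"
  unfolding hip_def by (simp add: sum_distrib_left mult.left_commute)
lemma hip_scale_left: "hip (c *s x) y = cnj c * hip x y"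
  unfolding hip_def by (simp add: sum_distrib_left mult.assoc)
lemma hip_zero_left[simp]: "hip 0 y = 0" unfolding hip_def by simp
lemma hip_zero_right[simp]: "hip x 0 = 0" unfolding hip_def by simp
lemma hip_cnj: "hip y x = cnj (hip x y)"
  unfolding hip_def by (simp add: mult.commute)
lemma norm_vec_sq: "(norm (x::complex^'m))\<^sup>2 = (\<Sum>j\<in>UNIV. (cmod (x $ j))\<^sup>2)"
  unfolding norm_vec_def L2_set_def by (simp add: sum_nonneg)
lemma hip_self: "hip x x = complex_of_real ((norm x)\<^sup>2)"
  unfolding hip_def norm_vec_sq
  by (simp add: complex_norm_square mult.commute of_real_sum del: of_real_power)
lemma Re_hip: "Re (hip x y) = x \<bullet> y"
  unfolding hip_def inner_vec_def inner_complex_def by (simp add: Re_sum)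
lemma hip_herm: assumes "hermitian C" shows "hip x (C *v y) = hip (C *v x) y"
proof -
  have h: "\<And>i j. cnj (C $ i $ j) = C $ j $ i" using assms unfolding hermitian_def
    by (metis complex_cnj_cnj)
  have "hip x (C *v y) = (\<Sum>j\<in>UNIV. \<Sum>k\<in>UNIV. cnj (x $ j) * C $ j $ k * y $ k)"
    unfolding hip_def matrix_vector_mult_def by (simp add: sum_distrib_left mult.assoc)
  also have "\<dots> = (\<Sum>k\<in>UNIV. \<Sum>j\<in>UNIV. cnj (x $ j) * C $ j $ k * y $ k)"
    by (rule sum.swap)
  also have "\<dots> = hip (C *v x) y"
    unfolding hip_def matrix_vector_mult_def
    by (simp add: sum_distrib_left h mult.commute mult.left_commute)
  finally show ?thesis .
qed
lemma cmod_hip_le: "cmod (hip x y) \<le> norm x * norm y"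
proof (cases "hip x y = 0")
  case True then show ?thesis by simp
next
  case False
  define u where "u = cnj (hip x y) / complex_of_real (cmod (hip x y))"
  have "hip x (u *s y) = complex_of_real (cmod (hip x y))"
    unfolding hip_scale_right u_def using False
    by (simp add: complex_norm_square[symmetric] power2_eq_square field_simps)
  then have "cmod (hip x y) = x \<bullet> (u *s y)" by (metis Re_hip Re_complex_of_real)
  also have "\<dots> \<le> norm x * norm (u *s y)" by (rule norm_cauchy_schwarz)
  also have "norm (u *s y) = norm y"
  proof -
    have "cmod u = 1" using False unfolding u_def by (simp add: norm_divide)
    then show ?thesis unfolding norm_vec_def L2_set_def by (simp add: norm_mult)
  qed
  finally show ?thesis .
qed
lemma mv_scaleR: "C *v (a *\<^sub>R x) = a *\<^sub>R (C *v (x::complex^'m))"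
  by (simp add: vec_eq_iff matrix_vector_mult_def scaleR_sum_right)
lemma mv_scale: "C *v (c *s x) = c *s (C *v (x::complex^'m))"
  by (simp add: vec_eq_iff matrix_vector_mult_def sum_distrib_left mult.left_commute)
lemma ofreal_scale: "complex_of_real r *s (x::complex^'m) = r *\<^sub>R x"
  unfolding vec_eq_iff vector_scaleR_component vector_smult_component by (simp add: scaleR_conv_of_real)
lemma inner_herm: "hermitian C \<Longrightarrow> x \<bullet> (C *v y) = (C *v x) \<bullet> y"
  by (metis Re_hip hip_herm)

lemma rayleigh:
  fixes C :: "complex^'m^'m"
  assumes pd: "pos_def_herm C"
  shows "\<exists>lam x0. x0 \<noteq> 0 \<and> C *v x0 = lam *\<^sub>R x0 \<and> lam > 0 \<and>
           (\<forall>x. lam * (norm x)\<^sup>2 \<le> x \<bullet> (C *v x))"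
proof -
  have herm: "hermitian C" using pd unfolding pos_def_herm_def by simp
  define q where "q x = x \<bullet> (C *v x)" for x :: "complex^'m"
  have qpos: "x \<noteq> 0 \<Longrightarrow> q x > 0" for x
    using pd unfolding pos_def_herm_def q_def by (simp add: Re_hip)
  have cont: "continuous_on (sphere 0 1) q"
    unfolding q_def inner_vec_def matrix_vector_mult_def inner_complex_def
    by (intro continuous_intros)
  obtain u :: "complex^'m" where u: "norm u = 1" using vector_choose_size[of 1] by auto
  have ne: "sphere (0::complex^'m) 1 \<noteq> {}" using u by auto
  obtain x0 where x0: "x0 \<in> sphere 0 1" and mn: "\<forall>y\<in>sphere 0 1. q x0 \<le> q y"
    using continuous_attains_inf[OF compact_sphere ne cont] by blast
  define lam where "lam = q x0"
  have nx0: "norm x0 = 1" using x0 by simp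
  have x0nz: "x0 \<noteq> 0" using nx0 by auto
  have lampos: "lam > 0" unfolding lam_def using qpos x0nz by simp
  have qscale: "q (a *\<^sub>R x) = a\<^sup>2 * q x" for a x
    unfolding q_def mv_scaleR by (simp add: power2_eq_square)
  have bound: "lam * (norm x)\<^sup>2 \<le> q x" for x
  proof (cases "x = 0")
    case True then show ?thesis by (simp add: q_def)
  next
    case False
    define y where "y = (1 / norm x) *\<^sub>R x"
    have ny: "y \<in> sphere 0 1" using False unfolding y_def by simp
    have "x = norm x *\<^sub>R y" using False unfolding y_def by simp
    then have "q x = (norm x)\<^sup>2 * q y" by (metis qscale)
    moreover have "lam \<le> q y" using mn ny unfolding lam_def by simp
    ultimately show ?thesis using mult_right_mono[of lam "q y" "(norm x)^2"] by (simp add: mult.commute)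
  qed
  define v where "v = C *v x0 - lam *\<^sub>R x0"
  define K where "K = q v - lam * (v \<bullet> v)"
  have key: "0 \<le> 2 * s * (v \<bullet> v) + s\<^sup>2 * K" for s
  proof -
    have b: "lam * (norm (x0 + s *\<^sub>R v))\<^sup>2 \<le> q (x0 + s *\<^sub>R v)" by (rule bound)
    have e1: "q (x0 + s *\<^sub>R v) = q x0 + 2 * s * (v \<bullet> (C *v x0)) + s\<^sup>2 * q v"
      unfolding q_def matrix_vector_right_distrib mv_scaleR
      using inner_herm[OF herm, of x0 v]
      by (simp add: inner_add_left inner_add_right inner_commute power2_eq_square algebra_simps)
    have e2: "(norm (x0 + s *\<^sub>R v))\<^sup>2 = 1 + 2 * s * (v \<bullet> x0) + s\<^sup>2 * (v \<bullet> v)"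
    proof -
      have "x0 \<bullet> x0 = 1" using nx0 by (metis inner_real_def norm_eq_sqrt_inner real_sqrt_eq_1_iff)
      then show ?thesis unfolding power2_norm_eq_inner
        by (simp add: inner_add_left inner_add_right inner_commute power2_eq_square algebra_simps
            del: inner_scaleR_left inner_scaleR_right inner_real_def) (simp add: inner_commute)
    qed
    have vv: "v \<bullet> v = v \<bullet> (C *v x0) - lam * (v \<bullet> x0)"
      unfolding v_def[of] by (simp only: v_def[symmetric]) (simp add: v_def inner_diff_right)
    show ?thesis using b unfolding e1 e2 K_def lam_def[symmetric] vv
      by (simp add: algebra_simps lam_def)
  qed
  have "v = 0"
  proof (rule ccontr)
    assume "v \<noteq> 0"
    then have p: "v \<bullet> v > 0" by simp
    show False
    proof (cases "K \<le> 0")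
      case True
      have "0 \<le> 2 * (-1) * (v \<bullet> v) + (-1)\<^sup>2 * K" by (rule key)
      then show False using True p by simp
    next
      case False
      have "0 \<le> 2 * (-(v \<bullet> v / K)) * (v \<bullet> v) + (-(v \<bullet> v / K))\<^sup>2 * K" by (rule key)
      then have "0 \<le> - ((v \<bullet> v)\<^sup>2 / K)" using False
        by (simp add: power2_eq_square field_simps)
      moreover have "(v \<bullet> v)\<^sup>2 / K > 0" using False p by simp
      ultimately show False by simp
    qed
  qed
  then have "C *v x0 = lam *\<^sub>R x0" unfolding v_def by simp
  then show ?thesis using x0nz lampos bound unfolding q_def by blast
qed
lemma eig_orth:
  assumes herm: "hermitian C" and "C *v x = complex_of_real r *s x" and "C *v y = complex_of_real s *s y"
    and "r \<noteq> s"
  shows "hip x y = 0"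
proof -
  have "hip (C *v x) y = complex_of_real r * hip x y" using assms(2) by (simp add: hip_scale_left)
  moreover have "hip x (C *v y) = complex_of_real s * hip x y" using assms(3) by (simp add: hip_scale_right)
  ultimately have "(complex_of_real r - complex_of_real s) * hip x y = 0"
    using hip_herm[OF herm, of x y] by (simp add: algebra_simps)
  then show ?thesis using assms(4) by simp
qed

lemma eig_finite:
  fixes C :: "complex^'m^'m"
  assumes herm: "hermitian C"
  shows "finite {r::real. \<exists>x. x \<noteq> 0 \<and> C *v x = complex_of_real r *s x}" (is "finite ?E")
proof -
  define f where "f r = (SOME x. x \<noteq> 0 \<and> C *v x = complex_of_real r *s x)" for r
  have fE: "f r \<noteq> 0 \<and> C *v f r = complex_of_real r *s f r" if rE: "r \<in> ?E" for r
  proof -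
    have "\<exists>x. x \<noteq> 0 \<and> C *v x = complex_of_real r *s x" using rE by simp
    then show ?thesis unfolding f_def by (rule someI_ex)
  qed
  have hz: "hip (f r) (f s) = 0" if r: "r \<in> ?E" and s: "s \<in> ?E" and ne: "r \<noteq> s" for r s
  proof (rule eig_orth[OF herm _ _ ne])
    show "C *v f r = complex_of_real r *s f r" using fE[OF r] by (rule conjunct2)
    show "C *v f s = complex_of_real s *s f s" using fE[OF s] by (rule conjunct2)
  qed
  have inj: "inj_on f ?E"
  proof (rule inj_onI)
    fix r s assume r: "r \<in> ?E" and s: "s \<in> ?E" and eq: "f r = f s"
    show "r = s"
    proof (rule ccontr)
      assume "r \<noteq> s"
      then have "hip (f r) (f s) = 0" by (rule hz[OF r s])
      then have "hip (f r) (f r) = 0" using eq by simp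
      then have "f r = 0" by (simp add: hip_self)
      then show False using fE[OF r] by simp
    qed
  qed
  have po: "pairwise orthogonal (f ` ?E)"
  proof (rule pairwiseI)
    fix a b assume a: "a \<in> f ` ?E" and b: "b \<in> f ` ?E" and ne: "a \<noteq> b"
    from a obtain r where r: "r \<in> ?E" "a = f r" by (rule imageE) simp
    from b obtain s where s: "s \<in> ?E" "b = f s" by (rule imageE) simp
    have "r \<noteq> s" using ne r s by auto
    then have "hip a b = 0" using hz[OF r(1) s(1)] r s by simp
    then show "orthogonal a b" unfolding orthogonal_def by (metis Re_hip zero_complex.simps(1))
  qed
  have "0 \<notin> f ` ?E"
  proof
    assume "0 \<in> f ` ?E"
    then obtain r where r: "r \<in> ?E" "0 = f r" by (rule imageE) simp
    then show False using fE[OF r(1)] by simp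
  qed
  then have "independent (f ` ?E)" by (rule pairwise_orthogonal_independent[OF po])
  then have "finite (f ` ?E)" using independent_bound by blast
  then show ?thesis using inj by (rule finite_imageD)
qed

lemma lambda_min_char:
  fixes C :: "complex^'m^'m"
  assumes pd: "pos_def_herm C"
  shows "lambda_min C > 0 \<and> (\<forall>x. lambda_min C * (norm x)\<^sup>2 \<le> Re (hip x (C *v x)))"
proof -
  have herm: "hermitian C" using pd unfolding pos_def_herm_def by simp
  obtain lam x0 where x0: "x0 \<noteq> 0" "C *v x0 = lam *\<^sub>R x0" "lam > 0"
     and b: "\<forall>x. lam * (norm x)\<^sup>2 \<le> x \<bullet> (C *v x)"
    using rayleigh[OF pd] by blast
  let ?E = "{r::real. \<exists>x. x \<noteq> 0 \<and> C *v x = complex_of_real r *s x}"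
  have inE: "lam \<in> ?E" using x0 by (auto simp: ofreal_scale)
  have low: "lam \<le> r" if rE: "r \<in> ?E" for r
  proof -
    obtain x where x: "x \<noteq> 0" "C *v x = complex_of_real r *s x" using rE by blast
    have "x \<bullet> (C *v x) = r * (norm x)\<^sup>2"
      using x(2) by (simp add: ofreal_scale power2_norm_eq_inner)
    then have "lam * (norm x)\<^sup>2 \<le> r * (norm x)\<^sup>2" using b by metis
    then show ?thesis using x(1) by simp
  qed
  have "lambda_min C = lam" unfolding lambda_min_def
    using eig_finite[OF herm] inE low by (intro Min_eqI) auto
  then show ?thesis using x0 b by (simp add: Re_hip)
qed
lemma ellipsoid_norm:
  assumes pd: "pos_def_herm C" and e: "e \<in> ellipsoid C"
  shows "norm e \<le> eps C"
proof -
  have l: "lambda_min C > 0" "lambda_min C * (norm e)\<^sup>2 \<le> Re (hip e (C *v e))"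
    using lambda_min_char[OF pd] by auto
  have "lambda_min C * (norm e)\<^sup>2 \<le> 1" using l(2) e unfolding ellipsoid_def by simp
  then have "(norm e)\<^sup>2 \<le> 1 / lambda_min C" using l(1) by (simp add: field_simps)
  then have "norm e \<le> sqrt (1 / lambda_min C)" using real_le_rsqrt by blast
  then show ?thesis unfolding eps_def by (simp add: real_sqrt_divide)
qed

lemma eps_nonneg: "pos_def_herm C \<Longrightarrow> eps C \<ge> 0"
  using lambda_min_char unfolding eps_def by fastforce

lemma hip_perturb: "\<bar>cmod (hip x (h + e)) - cmod (hip x h)\<bar> \<le> norm x * norm e"
proof -
  have "hip x (h + e) = hip x h + hip x e" by (rule hip_add_right)
  then have "\<bar>cmod (hip x (h + e)) - cmod (hip x h)\<bar> \<le> cmod (hip x e)"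
    by (metis abs_norm_cancel add_diff_cancel_left' norm_triangle_ineq3)
  then show ?thesis using cmod_hip_le[of x e] by linarith
qed

lemma part_a:
  assumes pd: "pos_def_herm C" and sg: "\<sigma> > 0" and t: "t \<ge> 0"
    and z: "zeta G w h \<sigma> (eps C) g t - cmod (hip (w g) h) \<le> 0"
    and e: "e \<in> ellipsoid C"
  shows "sinr G w h \<sigma> g e \<ge> t"
proof -
  define \<epsilon> where "\<epsilon> = eps C"
  have ep: "\<epsilon> \<ge> 0" using eps_nonneg[OF pd] unfolding \<epsilon>_def .
  have ne: "norm e \<le> \<epsilon>" using ellipsoid_norm[OF pd e] unfolding \<epsilon>_def .
  define L where "L = {1..G} - {g}"
  define D where "D = (\<Sum>l\<in>L. (cmod (hip (w l) h) + \<epsilon> * norm (w l))\<^sup>2) + \<sigma>\<^sup>2"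
  define D' where "D' = (\<Sum>l\<in>L. (cmod (hip (w l) (h + e)))\<^sup>2) + \<sigma>\<^sup>2"
  have pert: "cmod (hip x (h + e)) \<le> cmod (hip x h) + \<epsilon> * norm x"
     "cmod (hip x h) - \<epsilon> * norm x \<le> cmod (hip x (h + e))" for x
  proof -
    have "norm x * norm e \<le> \<epsilon> * norm x" using ne by (simp add: mult.commute mult_right_mono)
    then show "cmod (hip x (h + e)) \<le> cmod (hip x h) + \<epsilon> * norm x"
      "cmod (hip x h) - \<epsilon> * norm x \<le> cmod (hip x (h + e))"
      using hip_perturb[of x h e] by linarith+
  qed
  have DD: "D' \<le> D" unfolding D_def D'_def
    by (intro add_right_mono sum_mono power_mono pert(1)) simp
  have D'pos: "D' > 0" unfolding D'_def using sg by (intro add_nonneg_pos sum_nonneg) auto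
  have Dnn: "D \<ge> 0" using DD D'pos by linarith
  have zz: "\<epsilon> * norm (w g) + sqrt t * sqrt D \<le> cmod (hip (w g) h)"
    using z unfolding zeta_def D_def L_def \<epsilon>_def by simp
  then have A: "sqrt t * sqrt D \<le> cmod (hip (w g) (h + e))" using pert(2)[of "w g"] by linarith
  have "t * D = (sqrt t * sqrt D)\<^sup>2" using t Dnn by (simp add: power_mult_distrib)
  also have "\<dots> \<le> (cmod (hip (w g) (h + e)))\<^sup>2"
    using A by (intro power_mono) (use t Dnn in auto)
  finally have "t * D' \<le> (cmod (hip (w g) (h + e)))\<^sup>2"
    using mult_left_mono[OF DD t] by linarith
  then show ?thesis unfolding sinr_def using D'pos unfolding D'_def L_def
    by (simp add: le_divide_eq)
qed
lemma norm_smult_vec: "norm (c *s (x::complex^'m)) = cmod c * norm x"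
proof -
  have "(norm (c *s x))\<^sup>2 = (cmod c * norm x)\<^sup>2"
    unfolding norm_vec_sq power_mult_distrib by (simp add: norm_mult power_mult_distrib sum_distrib_left)
  then show ?thesis by (simp add: power2_eq_iff_nonneg)
qed

lemma perturb_zero:
  assumes "cmod (hip x h) < \<mu> * norm x"
  shows "\<exists>e. norm e \<le> \<mu> \<and> hip x (h + e) = 0"
proof -
  define n where "n = norm x"
  have n: "n > 0" using assms unfolding n_def
    by (metis mult_zero_right norm_ge_zero not_less norm_zero order.strict_trans1 zero_less_norm_iff)
  define e where "e = (- (hip x h / complex_of_real (n\<^sup>2))) *s x"
  have "hip x (h + e) = hip x h - hip x h / complex_of_real (n\<^sup>2) * complex_of_real (n\<^sup>2)"
    unfolding e_def hip_add_right hip_scale_right hip_self n_def by simp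
  also have "\<dots> = 0" using n by simp
  finally have 1: "hip x (h + e) = 0" .
  have "norm e = cmod (hip x h) / n" unfolding e_def norm_smult_vec using n
    by (simp add: norm_divide n_def power2_eq_square norm_mult del: of_real_mult)
  also have "\<dots> \<le> \<mu>" using assms n unfolding n_def by (simp add: divide_le_eq mult.commute)
  finally show ?thesis using 1 by blast
qed

lemma perturb_down:
  assumes "cmod (hip x h) \<ge> \<mu> * norm x" "\<mu> > 0"
  shows "\<exists>e. norm e \<le> \<mu> \<and> cmod (hip x (h + e)) = cmod (hip x h) - \<mu> * norm x"
proof (cases "hip x h = 0 \<or> x = 0")
  case True
  then have "x = 0" using assms
    by (metis mult_le_0_iff norm_eq_zero norm_ge_zero norm_zero order.strict_iff_not order_antisym)
  then show ?thesis using assms by (intro exI[of _ 0]) simp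
next
  case False
  define a where "a = hip x h"
  define n where "n = norm x"
  have n: "n > 0" using False unfolding n_def by simp
  have a: "cmod a > 0" using False unfolding a_def by simp
  define e where "e = (- (complex_of_real (\<mu> / (cmod a * n)) * a)) *s x"
  have "hip x (h + e) = a - complex_of_real (\<mu> / (cmod a * n)) * a * complex_of_real (n\<^sup>2)"
    unfolding e_def hip_add_right hip_scale_right hip_self n_def a_def by simp
  also have "\<dots> = a * complex_of_real (1 - \<mu> * n / cmod a)"
    using n a by (simp add: field_simps power2_eq_square)
  finally have "cmod (hip x (h + e)) = cmod a * \<bar>1 - \<mu> * n / cmod a\<bar>"
    by (simp only: norm_mult norm_of_real)
  also have "\<bar>1 - \<mu> * n / cmod a\<bar> = 1 - \<mu> * n / cmod a"
    using assms(1) a unfolding a_def[symmetric] n_def[symmetric] by (simp add: divide_le_eq)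
  also have "cmod a * (1 - \<mu> * n / cmod a) = cmod a - \<mu> * n" using a by (simp add: field_simps)
  finally have 1: "cmod (hip x (h + e)) = cmod (hip x h) - \<mu> * norm x" unfolding a_def n_def .
  have "norm e = \<bar>\<mu> / (cmod a * n)\<bar> * cmod a * n" unfolding e_def norm_smult_vec n_def
    by (simp only: norm_minus_cancel norm_mult norm_of_real)
  also have "\<dots> = \<mu>" using n a assms(2) by simp
  finally have "norm e = \<mu>" .
  then show ?thesis using 1 by (intro exI[of _ e]) simp
qed
lemma mat_mv: "mat c *v (x::complex^'m) = c *s x"
proof -
  have "(\<Sum>j\<in>UNIV. (if i = j then c else 0) * x $ j) = c * x $ i" for i
  proof -
    have "(\<Sum>j\<in>UNIV. (if i = j then c else 0) * x $ j) = (\<Sum>j\<in>UNIV. if i = j then c * x $ j else 0)"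
      by (rule sum.cong) auto
    also have "\<dots> = c * x $ i" by simp
    finally show ?thesis .
  qed
  then show ?thesis unfolding vec_eq_iff matrix_vector_mult_def mat_def by simp
qed

lemma scalar_mat:
  assumes mu: "\<mu> > 0"
  shows "eps (mat (complex_of_real (1 / \<mu>\<^sup>2)) :: complex^'m^'m) = \<mu>"
    and "norm (e::complex^'m) \<le> \<mu> \<Longrightarrow> e \<in> ellipsoid (mat (complex_of_real (1 / \<mu>\<^sup>2)))"
proof -
  let ?c = "complex_of_real (1 / \<mu>\<^sup>2)"
  have "{r::real. \<exists>x::complex^'m. x \<noteq> 0 \<and> mat ?c *v x = complex_of_real r *s x} = {1 / \<mu>\<^sup>2}"
  proof (intro set_eqI iffI)
    fix r assume "r \<in> {r::real. \<exists>x::complex^'m. x \<noteq> 0 \<and> mat ?c *v x = complex_of_real r *s x}"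
    then obtain x :: "complex^'m" where x: "x \<noteq> 0" "?c *s x = complex_of_real r *s x"
      unfolding mat_mv by blast
    have "\<exists>j. x $ j \<noteq> 0" using x(1) by (simp add: vec_eq_iff)
    then obtain j where j: "x $ j \<noteq> 0" by blast
    have "(?c *s x) $ j = (complex_of_real r *s x) $ j" using x(2) by (rule arg_cong)
    then have "?c * x $ j = complex_of_real r * x $ j" by (simp only: vector_smult_component)
    then have "?c = complex_of_real r" using j by (rule mult_right_cancel[THEN iffD1, rotated])
    then have "1 / \<mu>\<^sup>2 = r" by (simp only: of_real_eq_iff)
    then show "r \<in> {1 / \<mu>\<^sup>2}" by simp
  next
    fix r assume "r \<in> {1 / \<mu>\<^sup>2}"
    then have r: "r = 1 / \<mu>\<^sup>2" by simp
    define a where "a = axis (undefined::'m) (1::complex)"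
    have "a $ undefined = 1" unfolding a_def by (simp add: axis_def)
    then have "a \<noteq> 0" by auto
    moreover have "mat ?c *v a = complex_of_real r *s a" unfolding mat_mv r ..
    ultimately show "r \<in> {r::real. \<exists>x::complex^'m. x \<noteq> 0 \<and> mat ?c *v x = complex_of_real r *s x}"
      by blast
  qed
  then have "lambda_min (mat ?c :: complex^'m^'m) = 1 / \<mu>\<^sup>2" unfolding lambda_min_def by simp
  then show "eps (mat ?c :: complex^'m^'m) = \<mu>" unfolding eps_def using mu
    by (simp add: real_sqrt_divide)
  assume ne: "norm e \<le> \<mu>"
  have "Re (hip e (mat ?c *v e)) = (norm e)\<^sup>2 / \<mu>\<^sup>2"
    unfolding mat_mv hip_scale_right hip_self by simp
  also have "\<dots> \<le> 1" using ne mu by (simp add: power_mono)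
  finally show "e \<in> ellipsoid (mat ?c)" unfolding ellipsoid_def by simp
qed

lemma sinr_nonneg: "sinr G w h \<sigma> g e \<ge> 0"
  unfolding sinr_def by (intro divide_nonneg_nonneg add_nonneg_nonneg sum_nonneg) auto

lemma Wset_bound:
  fixes w :: "nat \<Rightarrow> complex^'m"
  assumes "w \<in> Wset pc \<gamma> G" "g \<in> {1..G}" "\<gamma> > 0"
  shows "(norm (w g))\<^sup>2 \<le> real CARD('m) * \<gamma>"
proof (cases pc)
  case SumPower
  then have "(\<Sum>g\<in>{1..G}. (norm (w g))\<^sup>2) \<le> \<gamma>" using assms(1) unfolding Wset_def by simp
  moreover have "(norm (w g))\<^sup>2 \<le> (\<Sum>g\<in>{1..G}. (norm (w g))\<^sup>2)"
    using assms(2) by (intro member_le_sum) auto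
  moreover have "\<gamma> \<le> real CARD('m) * \<gamma>"
  proof -
    have "CARD('m) > 0" by (rule finite_UNIV_card_ge_0) (rule finite_class.finite_UNIV)
    then have "real CARD('m) \<ge> 1" by linarith
    then show ?thesis using assms(3) by simp
  qed
  ultimately show ?thesis by linarith
next
  case PerAntenna
  then have h: "\<forall>m. (\<Sum>g\<in>{1..G}. (cmod (w g $ m))\<^sup>2) \<le> \<gamma>" using assms(1) unfolding Wset_def by simp
  have "(cmod (w g $ m))\<^sup>2 \<le> \<gamma>" for m
    using h[rule_format, of m] member_le_sum[of g "{1..G}" "\<lambda>g. (cmod (w g $ m))\<^sup>2"] assms(2) by auto
  then have "(\<Sum>m\<in>(UNIV::'m set). (cmod (w g $ m))\<^sup>2) \<le> (\<Sum>m\<in>(UNIV::'m set). \<gamma>)"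
    by (intro sum_mono) auto
  then show ?thesis unfolding norm_vec_sq by simp
qed

lemma sinr_bound:
  assumes "w \<in> Wset pc \<gamma> G" "g \<in> {1..G}" "\<gamma> > 0" "\<sigma> > 0"
  shows "sinr G w (h::complex^'m) \<sigma> g 0 \<le> real CARD('m) * \<gamma> * (norm h)\<^sup>2 / \<sigma>\<^sup>2"
proof -
  have "sinr G w h \<sigma> g 0 \<le> (cmod (hip (w g) h))\<^sup>2 / \<sigma>\<^sup>2"
    unfolding sinr_def add_0_right using assms(4)
    by (intro divide_left_mono mult_pos_pos add_nonneg_pos sum_nonneg) (auto intro!: sum_nonneg)
  also have "(cmod (hip (w g) h))\<^sup>2 \<le> (norm (w g) * norm h)\<^sup>2"
    by (intro power_mono cmod_hip_le) auto
  also have "\<dots> \<le> real CARD('m) * \<gamma> * (norm h)\<^sup>2"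
    unfolding power_mult_distrib using Wset_bound[OF assms(1-3)] by (intro mult_right_mono) auto
  finally show ?thesis using assms(4) by (simp add: divide_right_mono)
qed
theorem mainTheorem4:
  fixes G :: nat and N :: "nat \<Rightarrow> 'u set"
    and h :: "'u \<Rightarrow> nat \<Rightarrow> complex ^ 'm" and \<sigma> :: "'u \<Rightarrow> nat \<Rightarrow> real"
    and C :: "'u \<Rightarrow> nat \<Rightarrow> complex ^ 'm ^ 'm"
    and \<gamma> :: real and pc :: power_constraint
  assumes G: "G \<ge> 1"
    and N: "\<forall>g\<in>{1..G}. finite (N g) \<and> N g \<noteq> {}"
    and sig: "\<forall>g\<in>{1..G}. \<forall>i\<in>N g. \<sigma> i g > 0"
    and Cpd: "\<forall>g\<in>{1..G}. \<forall>i\<in>N g. pos_def_herm (C i g)"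
    and gam: "\<gamma> > 0"
  shows
    "(\<forall>t w. t \<ge> 0 \<longrightarrow> w \<in> Wset pc \<gamma> G \<longrightarrow>
        (\<forall>g\<in>{1..G}. \<forall>i\<in>N g.
           zeta G w (h i g) (\<sigma> i g) (eps (C i g)) g t - cmod (hip (w g) (h i g)) \<le> 0) \<longrightarrow>
        (\<forall>g\<in>{1..G}. \<forall>i\<in>N g. \<forall>e\<in>ellipsoid (C i g).
           sinr G w (h i g) (\<sigma> i g) g e \<ge> t))
     \<and> V_App pc \<gamma> G N h \<sigma> C \<le> V_MMF pc \<gamma> G N h \<sigma> C
     \<and> (\<forall>\<mu>::real. G = 1 \<and> \<mu> > 0 \<and>
          (\<forall>i\<in>N 1. C i 1 = mat (complex_of_real (1 / \<mu>\<^sup>2))) \<longrightarrow>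
          V_App pc \<gamma> G N h \<sigma> C = V_MMF pc \<gamma> G N h \<sigma> C)"
proof -
  define I where "I = {(i, g). g \<in> {1..G} \<and> i \<in> N g}"
  define Q where "Q w = (\<lambda>(i, g). INF e\<in>ellipsoid (C i g). sinr G w (h i g) (\<sigma> i g) g e)"
    for w :: "nat \<Rightarrow> complex^'m"
  define F where "F w = Min (Q w ` I)" for w
  define S where "S = {t. t \<ge> 0 \<and> (\<exists>w\<in>Wset pc \<gamma> G. \<forall>g\<in>{1..G}. \<forall>i\<in>N g.
              zeta G w (h i g) (\<sigma> i g) (eps (C i g)) g t - cmod (hip (w g) (h i g)) \<le> 0)}"
  have VM: "V_MMF pc \<gamma> G N h \<sigma> C = (SUP w\<in>Wset pc \<gamma> G. F w)"
    unfolding V_MMF_def F_def Q_def I_def ..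
  have VA: "V_App pc \<gamma> G N h \<sigma> C = Sup S" unfolding V_App_def S_def ..
  have "I = (\<Union>g\<in>{1..G}. (\<lambda>i. (i, g)) ` N g)" unfolding I_def by auto
  then have finI: "finite I" using N by auto
  obtain i1 where i1: "i1 \<in> N 1" using N G by fastforce
  have i1I: "(i1, 1) \<in> I" unfolding I_def using i1 G by auto
  have neI: "I \<noteq> {}" using i1I by auto
  have ell0: "0 \<in> ellipsoid A" for A :: "complex^'m^'m" unfolding ellipsoid_def by simp
  have Qle: "Q w (i, g) \<le> sinr G w (h i g) (\<sigma> i g) g e" if "e \<in> ellipsoid (C i g)" for w :: "nat \<Rightarrow> complex^'m" and i g e
    unfolding Q_def using that by (auto intro!: cINF_lower bdd_belowI[of _ 0] sinr_nonneg)
  have Qge: "Q w (i, g) \<ge> t" if "\<forall>e\<in>ellipsoid (C i g). sinr G w (h i g) (\<sigma> i g) g e \<ge> t"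
    for w :: "nat \<Rightarrow> complex^'m" and i g t
    unfolding Q_def using that ell0 by (auto intro!: cINF_greatest)
  have Fle: "F w \<le> Q w ig" if "ig \<in> I" for w :: "nat \<Rightarrow> complex^'m" and ig
    unfolding F_def using finI that by (auto intro!: Min_le)
  have Fge: "F w \<ge> t" if "\<forall>ig\<in>I. Q w ig \<ge> t" for w :: "nat \<Rightarrow> complex^'m" and t
    unfolding F_def using finI neI that by (auto simp: Min_ge_iff)
  have w0: "(\<lambda>_. 0::complex^'m) \<in> Wset pc \<gamma> G" using gam unfolding Wset_def by (cases pc) auto
  have bdd: "bdd_above (F ` Wset pc \<gamma> G)"
  proof (rule bdd_aboveI2)
    fix w :: "nat \<Rightarrow> complex^'m" assume w: "w \<in> Wset pc \<gamma> G"
    have "F w \<le> Q w (i1, 1)" by (rule Fle[OF i1I])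
    also have "\<dots> \<le> sinr G w (h i1 1) (\<sigma> i1 1) 1 0" by (rule Qle[OF ell0])
    also have "\<dots> \<le> real CARD('m) * \<gamma> * (norm (h i1 1))\<^sup>2 / (\<sigma> i1 1)\<^sup>2"
      using sinr_bound[OF w _ gam] sig i1 G by auto
    finally show "F w \<le> real CARD('m) * \<gamma> * (norm (h i1 1))\<^sup>2 / (\<sigma> i1 1)\<^sup>2" .
  qed
  have A: "\<forall>t w. t \<ge> 0 \<longrightarrow> w \<in> Wset pc \<gamma> G \<longrightarrow>
        (\<forall>g\<in>{1..G}. \<forall>i\<in>N g.
           zeta G w (h i g) (\<sigma> i g) (eps (C i g)) g t - cmod (hip (w g) (h i g)) \<le> 0) \<longrightarrow>
        (\<forall>g\<in>{1..G}. \<forall>i\<in>N g. \<forall>e\<in>ellipsoid (C i g).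
           sinr G w (h i g) (\<sigma> i g) g e \<ge> t)"
  proof (intro allI impI ballI)
    fix t and w :: "nat \<Rightarrow> complex^'m" and g i e
    assume t: "t \<ge> 0" and w: "w \<in> Wset pc \<gamma> G"
      and z: "\<forall>g\<in>{1..G}. \<forall>i\<in>N g.
           zeta G w (h i g) (\<sigma> i g) (eps (C i g)) g t - cmod (hip (w g) (h i g)) \<le> 0"
      and g: "g \<in> {1..G}" and i: "i \<in> N g" and e: "e \<in> ellipsoid (C i g)"
    show "sinr G w (h i g) (\<sigma> i g) g e \<ge> t"
    proof (rule part_a[OF _ _ t _ e])
      show "pos_def_herm (C i g)" using Cpd g i by blast
      show "\<sigma> i g > 0" using sig g i by blast
      show "zeta G w (h i g) (\<sigma> i g) (eps (C i g)) g t - cmod (hip (w g) (h i g)) \<le> 0"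
        using z g i by blast
    qed
  qed
  have SM: "t \<le> V_MMF pc \<gamma> G N h \<sigma> C" if tS: "t \<in> S" for t
  proof -
    obtain w :: "nat \<Rightarrow> complex^'m" where w: "w \<in> Wset pc \<gamma> G" and t: "t \<ge> 0" and z: "\<forall>g\<in>{1..G}. \<forall>i\<in>N g.
              zeta G w (h i g) (\<sigma> i g) (eps (C i g)) g t - cmod (hip (w g) (h i g)) \<le> 0"
      using tS unfolding S_def by blast
    have "\<forall>ig\<in>I. Q w ig \<ge> t"
    proof
      fix ig assume "ig \<in> I"
      then obtain i g where ig: "ig = (i, g)" "g \<in> {1..G}" "i \<in> N g" unfolding I_def by auto
      show "Q w ig \<ge> t" unfolding ig(1) using A t w z ig by (intro Qge) blast
    qed
    then have "t \<le> F w" by (rule Fge)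
    also have "\<dots> \<le> (SUP w\<in>Wset pc \<gamma> G. F w)" by (rule cSUP_upper[OF w bdd])
    finally show ?thesis unfolding VM .
  qed
  have zeta0: "zeta G (\<lambda>_. 0) (h i g) (\<sigma> i g) (eps (C i g)) g 0 = 0" for i g
    unfolding zeta_def by simp
  have S0: "0 \<in> S" unfolding S_def using zeta0 by (auto intro!: bexI[OF _ w0])
  have bddS: "bdd_above S" using SM by (intro bdd_aboveI) blast
  have B: "V_App pc \<gamma> G N h \<sigma> C \<le> V_MMF pc \<gamma> G N h \<sigma> C"
    unfolding VA using S0 SM by (intro cSup_least) auto
  have Cpart: "V_App pc \<gamma> G N h \<sigma> C = V_MMF pc \<gamma> G N h \<sigma> C"
    if G1: "G = 1" and mu: "\<mu> > 0" and Cm: "\<forall>i\<in>N 1. C i 1 = mat (complex_of_real (1 / \<mu>\<^sup>2))"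
    for \<mu> :: real
  proof -
    have epsC: "eps (C i 1) = \<mu>" if "i \<in> N 1" for i using Cm that scalar_mat(1)[OF mu] by simp
    have ellC: "e \<in> ellipsoid (C i 1)" if "i \<in> N 1" "norm e \<le> \<mu>" for i e
      using Cm that scalar_mat(2)[OF mu] by simp
    have sinr1: "sinr G w hh ss 1 e = (cmod (hip (w 1) (hh + e)))\<^sup>2 / ss\<^sup>2" for w hh ss e
      unfolding sinr_def G1 by simp
    have zeta1: "zeta G w hh ss \<mu> 1 t = \<mu> * norm (w 1) + sqrt t * ss" if "ss > 0" for w hh ss t
      unfolding zeta_def G1 using that by simp
    have "V_MMF pc \<gamma> G N h \<sigma> C \<le> Sup S" unfolding VM
    proof (rule cSUP_least)
      show "Wset pc \<gamma> G \<noteq> ({}::(nat \<Rightarrow> complex^'m) set)" using w0 by blast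
    next
      fix w :: "nat \<Rightarrow> complex^'m" assume w: "w \<in> Wset pc \<gamma> G"
      define n where "n = norm (w 1)"
      show "F w \<le> Sup S"
      proof (cases "\<exists>i\<in>N 1. cmod (hip (w 1) (h i 1)) < \<mu> * n")
        case True
        then obtain i where i: "i \<in> N 1" "cmod (hip (w 1) (h i 1)) < \<mu> * n" by blast
        obtain e where e: "norm e \<le> \<mu>" "hip (w 1) (h i 1 + e) = 0"
          using perturb_zero[OF i(2)[unfolded n_def]] by blast
        have iI: "(i, 1) \<in> I" unfolding I_def using i G1 by auto
        have "F w \<le> Q w (i, 1)" by (rule Fle[OF iI])
        also have "\<dots> \<le> sinr G w (h i 1) (\<sigma> i 1) 1 e" by (rule Qle[OF ellC[OF i(1) e(1)]])
        also have "\<dots> = 0" unfolding sinr1 e(2) by simp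
        also have "0 \<le> Sup S" by (rule cSup_upper[OF S0 bddS])
        finally show ?thesis .
      next
        case False
        have Fnn: "F w \<ge> 0"
        proof (rule Fge, rule ballI)
          fix ig assume "ig \<in> I"
          then obtain i g where ig: "ig = (i, g)" unfolding I_def by auto
          show "Q w ig \<ge> 0" unfolding ig by (rule Qge) (simp add: sinr_nonneg)
        qed
        have "F w \<in> S" unfolding S_def
        proof (intro CollectI conjI bexI[OF _ w] ballI Fnn)
          fix g i assume g: "g \<in> {1..G}" and i: "i \<in> N g"
          have g1: "g = 1" using g G1 by simp
          have i1': "i \<in> N 1" using i g1 by simp
          have sp: "\<sigma> i 1 > 0" using sig i1' G1 by auto
          have ge: "cmod (hip (w 1) (h i 1)) \<ge> \<mu> * norm (w 1)" using False i1' n_def by auto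
          obtain e where e: "norm e \<le> \<mu>"
            "cmod (hip (w 1) (h i 1 + e)) = cmod (hip (w 1) (h i 1)) - \<mu> * norm (w 1)"
            using perturb_down[OF ge mu] by blast
          have iI: "(i, 1) \<in> I" unfolding I_def using i1' G1 by auto
          have "F w \<le> Q w (i, 1)" by (rule Fle[OF iI])
          also have "\<dots> \<le> sinr G w (h i 1) (\<sigma> i 1) 1 e" by (rule Qle[OF ellC[OF i1' e(1)]])
          also have "\<dots> = ((cmod (hip (w 1) (h i 1)) - \<mu> * norm (w 1)) / \<sigma> i 1)\<^sup>2"
            unfolding sinr1 e(2) by (simp add: power_divide)
          finally have "sqrt (F w) \<le> sqrt (((cmod (hip (w 1) (h i 1)) - \<mu> * norm (w 1)) / \<sigma> i 1)\<^sup>2)"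
            by (rule real_sqrt_le_mono)
          also have "\<dots> = (cmod (hip (w 1) (h i 1)) - \<mu> * norm (w 1)) / \<sigma> i 1"
            using ge sp by simp
          finally have "sqrt (F w) * \<sigma> i 1 \<le> cmod (hip (w 1) (h i 1)) - \<mu> * norm (w 1)"
            using sp by (simp add: le_divide_eq)
          then show "zeta G w (h i g) (\<sigma> i g) (eps (C i g)) g (F w) - cmod (hip (w g) (h i g)) \<le> 0"
            unfolding g1 epsC[OF i1'] zeta1[OF sp] by simp
        qed
        then show ?thesis by (rule cSup_upper[OF _ bddS])
      qed
    qed
    then show ?thesis using B unfolding VA by linarith
  qed
  show ?thesis
  proof (intro conjI allI impI)
    show "V_App pc \<gamma> G N h \<sigma> C \<le> V_MMF pc \<gamma> G N h \<sigma> C" by (rule B)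
  next
    fix \<mu> :: real
    assume "G = 1 \<and> \<mu> > 0 \<and> (\<forall>i\<in>N 1. C i 1 = mat (complex_of_real (1 / \<mu>\<^sup>2)))"
    then show "V_App pc \<gamma> G N h \<sigma> C = V_MMF pc \<gamma> G N h \<sigma> C" by (elim conjE) (rule Cpart)
  qed (use A in blast)
qed
end
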